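(* Let $\lambda$ be a nonzero real number and $x$ a real number with $1+\lambda x>0$. Then for every integer $n\ge0$, \[ \mathrm{Bel}_{n+1,\lambda}(x)=x\sum_{l=0}^{n}\binom{n}{l}\big(\mathrm{Bel}_{l,\lambda}(x)-\lambda\,\mathrm{Bel}_{l+1,\lambda}(x)\big). \]
   Context: For nonzero real $\lambda$, $e_\lambda(x)=(1+\lambda x)^{1/\lambda}$ and $e_\lambda^{-1}(x)=(1+\lambda x)^{-1/\lambda}$. The new type degenerate Bell polynomials $\mathrm{Bel}_{n,\lambda}(x)$ are defined by $e_{\lambda}(xe^{t})\,e_{\lambda}^{-1}(x)=\big(\frac{1+\lambda xe^t}{1+\lambda x}\big)^{1/\lambda}=\sum_{n=0}^{\infty}\mathrm{Bel}_{n,\lambda}(x)\frac{t^{n}}{n!}$ (expansion in powers of $t$). *)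

theory Defs
  imports "HOL-Analysis.Analysis"
begin

text \<open>Generating function of the new type degenerate Bell polynomials:
  G(t) = e_lam(x e^t) e_lam^{-1}(x) = ((1 + lam x e^t)/(1 + lam x)) powr (1/lam).\<close>
definition deg_bell_gf :: "real \<Rightarrow> real \<Rightarrow> real \<Rightarrow> real" where
  "deg_bell_gf lam x t = ((1 + lam * x * exp t) / (1 + lam * x)) powr (1 / lam)"

text \<open>Bel_{n,lam}(x) is n! times the coefficient of t^n in the expansion of the
  generating function in powers of t, i.e. its n-th derivative in t at t = 0.\<close>
definition Bel :: "nat \<Rightarrow> real \<Rightarrow> real \<Rightarrow> real" where
  "Bel n lam x = (deriv ^^ n) (deg_bell_gf lam x) 0"

end

theory Submission
  imports Defs "HOL-Complex_Analysis.Complex_Analysis"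
begin

lemma real_link:
  fixes G :: "real \<Rightarrow> real" and f :: "complex \<Rightarrow> complex"
  assumes hol: "f holomorphic_on T" and oT: "open T" and oS: "open S"
    and ST: "\<And>s. s \<in> S \<Longrightarrow> complex_of_real s \<in> T"
    and eq: "\<And>s. s \<in> S \<Longrightarrow> G s = Re (f (complex_of_real s))"
  shows "t \<in> S \<Longrightarrow> (deriv ^^ n) G t = Re ((deriv ^^ n) f (complex_of_real t))"
proof (induction n arbitrary: t)
  case 0
  then show ?case using eq by simp
next
  case (Suc n)
  have ev: "eventually (\<lambda>s. (deriv ^^ n) G s = Re ((deriv ^^ n) f (complex_of_real s))) (nhds t)"
    using eventually_nhds_in_open[OF oS Suc.prems] by (rule eventually_mono) (use Suc.IH in auto)
  have "deriv ((deriv ^^ n) G) t = deriv (\<lambda>s. Re ((deriv ^^ n) f (complex_of_real s))) t"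
    by (rule deriv_cong_ev[OF ev refl])
  also have "\<dots> = Re ((deriv ^^ Suc n) f (complex_of_real t))"
  proof (rule DERIV_imp_deriv)
    have "((deriv ^^ n) f has_field_derivative (deriv ^^ Suc n) f (complex_of_real t)) (at (complex_of_real t))"
      by (rule has_field_derivative_higher_deriv[OF hol oT ST[OF Suc.prems]])
    then have "((\<lambda>s. (deriv ^^ n) f (complex_of_real s)) has_vector_derivative (deriv ^^ Suc n) f (complex_of_real t)) (at t)"
      by (rule has_vector_derivative_real_field)
    then show "((\<lambda>s. Re ((deriv ^^ n) f (complex_of_real s))) has_field_derivative Re ((deriv ^^ Suc n) f (complex_of_real t))) (at t)"
      by (rule has_field_derivative_Re)
  qed
  finally show ?case by simp
qed

lemma higher_deriv_cexp:
  "(deriv ^^ k) (\<lambda>w. c * exp w) = (\<lambda>w. c * exp (w::complex))"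
proof (induction k)
  case (Suc k)
  have "deriv (\<lambda>w. c * exp w) = (\<lambda>w. c * exp (w::complex))"
    by (rule ext, rule DERIV_imp_deriv) (auto intro!: derivative_eq_intros)
  then show ?case using Suc by simp
qed simp

theorem theorem8:
  fixes lam x :: real and n :: nat
  assumes "lam \<noteq> 0" and "1 + lam * x > 0"
  shows "Bel (n + 1) lam x
         = x * (\<Sum>l = 0..n. real (n choose l) * (Bel l lam x - lam * Bel (l + 1) lam x))"
proof -
  define c where "c = 1 + lam * x"
  have c: "c > 0" using assms c_def by simp
  define u where "u = (\<lambda>z. (1 + complex_of_real (lam * x) * exp z) / complex_of_real c)"
  define f where "f = (\<lambda>z. exp (complex_of_real (1 / lam) * Ln (u z)))"
  define T where "T = {z. Re (u z) > 0}"
  define S where "S = {t::real. 1 + lam * x * exp t > 0}"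
  have oT: "open T" unfolding T_def u_def
    by (intro open_Collect_less continuous_intros) (use c in auto)
  have oS: "open S" unfolding S_def
    by (intro open_Collect_less continuous_intros)
  have 0: "0 \<in> S" "(0::complex) \<in> T" using c by (auto simp: S_def T_def u_def c_def)
  have uT: "u z \<notin> \<real>\<^sub>\<le>\<^sub>0" if "z \<in> T" for z
    using that by (auto simp: T_def complex_nonpos_Reals_iff)
  have uz: "1 + complex_of_real (lam * x) * exp z \<noteq> 0" if "z \<in> T" for z
  proof
    assume "1 + complex_of_real (lam * x) * exp z = 0"
    then have "u z = 0" by (simp add: u_def)
    then show False using that by (simp add: T_def)
  qed
  have hol: "f holomorphic_on T" unfolding f_def u_def
    using uT unfolding u_def by (intro holomorphic_intros) auto
  have ST: "complex_of_real s \<in> T" if "s \<in> S" for s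
  proof -
    have "u (complex_of_real s) = complex_of_real ((1 + lam * x * exp s) / c)"
      by (simp add: u_def exp_of_real)
    then show ?thesis using that c by (simp add: T_def S_def)
  qed
  have eq: "deg_bell_gf lam x s = Re (f (complex_of_real s))" if "s \<in> S" for s
  proof -
    have a: "(1 + lam * x * exp s) / c > 0" using that c by (simp add: S_def)
    have ueq: "u (complex_of_real s) = complex_of_real ((1 + lam * x * exp s) / c)"
      by (simp add: u_def exp_of_real)
    have "f (complex_of_real s) = exp (complex_of_real (1 / lam) * Ln (complex_of_real ((1 + lam * x * exp s) / c)))"
      by (simp only: f_def ueq)
    also have "\<dots> = exp (complex_of_real (1 / lam) * complex_of_real (ln ((1 + lam * x * exp s) / c)))"
      using a by (simp only: Ln_of_real)
    also have "\<dots> = complex_of_real (exp (1 / lam * ln ((1 + lam * x * exp s) / c)))"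
      by (simp only: of_real_mult[symmetric] exp_of_real)
    finally have "f (complex_of_real s) = complex_of_real (exp (1 / lam * ln ((1 + lam * x * exp s) / c)))" .
    moreover have "1 + lam * x * exp s > 0" using that by (simp add: S_def)
    ultimately show ?thesis using a c by (simp add: deg_bell_gf_def powr_def c_def mult.commute)
  qed
  have link: "Bel k lam x = Re ((deriv ^^ k) f 0)" for k
    unfolding Bel_def using real_link[OF hol oT oS ST eq 0(1)] by simp
  have df: "(f has_field_derivative f z * (complex_of_real x * exp z / (1 + complex_of_real (lam * x) * exp z))) (at z)"
    if z: "z \<in> T" for z
  proof -
    have "(f has_field_derivative exp (complex_of_real (1 / lam) * Ln (u z)) *
            (complex_of_real (1 / lam) * (inverse (u z) * (complex_of_real (lam * x) * exp z / complex_of_real c)))) (at z)"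
      unfolding f_def u_def using uT[OF z] unfolding u_def
      by (auto intro!: derivative_eq_intros)
    moreover have "exp (complex_of_real (1 / lam) * Ln (u z)) *
            (complex_of_real (1 / lam) * (inverse (u z) * (complex_of_real (lam * x) * exp z / complex_of_real c)))
          = f z * (complex_of_real x * exp z / (1 + complex_of_real (lam * x) * exp z))"
      using uz[OF z] c assms(1) by (simp add: f_def u_def field_simps)
    ultimately show ?thesis by simp
  qed
  define h where "h = (\<lambda>z. f z - complex_of_real lam * deriv f z)"
  have hold: "deriv f holomorphic_on T" using hol oT by (rule holomorphic_deriv)
  have holh: "h holomorphic_on T" unfolding h_def using hol hold oT by (intro holomorphic_intros)
  have feq: "deriv f z = h z * (complex_of_real x * exp z)" if z: "z \<in> T" for z
  proof -
    have d: "deriv f z = f z * (complex_of_real x * exp z / (1 + complex_of_real (lam * x) * exp z))"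
      using df[OF z] by (rule DERIV_imp_deriv)
    show ?thesis unfolding h_def d using uz[OF z] by (simp add: field_simps)
  qed
  have "(deriv ^^ Suc n) f 0 = (deriv ^^ n) (deriv f) 0"
    by (simp add: funpow_Suc_right del: funpow.simps)
  also have "\<dots> = (deriv ^^ n) (\<lambda>w. h w * (complex_of_real x * exp w)) 0"
    by (rule higher_deriv_transform_within_open[OF hold _ oT 0(2)])
       (use holh feq in \<open>auto intro!: holomorphic_intros\<close>)
  also have "\<dots> = (\<Sum>i = 0..n. of_nat (n choose i) * (deriv ^^ i) h 0 * (deriv ^^ (n-i)) (\<lambda>w. complex_of_real x * exp w) 0)"
    by (rule higher_deriv_mult[OF holh _ oT 0(2)]) (auto intro!: holomorphic_intros)
  also have "\<dots> = complex_of_real x * (\<Sum>i = 0..n. of_nat (n choose i) * ((deriv ^^ i) f 0 - complex_of_real lam * (deriv ^^ (i+1)) f 0))"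
  proof -
    have hd: "(deriv ^^ i) h 0 = (deriv ^^ i) f 0 - complex_of_real lam * (deriv ^^ (i+1)) f 0" for i
    proof -
      have "(deriv ^^ i) h 0 = (deriv ^^ i) f 0 - (deriv ^^ i) (\<lambda>w. complex_of_real lam * deriv f w) 0"
        unfolding h_def by (rule higher_deriv_diff[OF hol _ oT 0(2)]) (use hold in \<open>auto intro!: holomorphic_intros\<close>)
      also have "(deriv ^^ i) (\<lambda>w. complex_of_real lam * deriv f w) 0 = complex_of_real lam * (deriv ^^ i) (deriv f) 0"
        by (rule higher_deriv_cmult[OF hold 0(2) oT])
      finally show ?thesis by (simp add: funpow_Suc_right del: funpow.simps)
    qed
    show ?thesis by (simp only: hd higher_deriv_cexp) (simp add: sum_distrib_left algebra_simps)
  qed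
  finally have ceq: "(deriv ^^ Suc n) f 0 = complex_of_real x * (\<Sum>i = 0..n. of_nat (n choose i) * ((deriv ^^ i) f 0 - complex_of_real lam * (deriv ^^ (i+1)) f 0))" .
  show ?thesis unfolding link using ceq by (simp add: Re_sum)
qed

end
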